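(* Let $p$ be a prime. Let $G=P\times A$, where $P$ is a finite non-abelian $p$-group and $A$ is a non-trivial finite abelian group of order coprime to $p$. Let $H=P_1\times X$ be a finite nilpotent group, where $P_1$ is a non-abelian $p$-group and $X$ is a group with $\gcd(p,|X|)=1$. Suppose that $\Gamma_G$ and $\Gamma_H$ are irregular and $\Gamma_G\cong\Gamma_H$. Then $|G|=|H|$.
   Context: For a non-abelian group $G$ with center $Z(G)$, the non-commuting graph $\Gamma_G$ is the simple graph with vertex set $G\setminus Z(G)$ in which two distinct vertices $x,y$ are adjacent if and only if $xy\neq yx$. A graph is regular if all its vertices have the same degree, and irregular otherwise. *)

theory Defs
  imports "HOL-Algebra.Algebra"
begin

definition grp_center :: "('a, 'b) monoid_scheme \<Rightarrow> 'a set" where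
  "grp_center G = {z \<in> carrier G. \<forall>g \<in> carrier G. z \<otimes>\<^bsub>G\<^esub> g = g \<otimes>\<^bsub>G\<^esub> z}"

definition nc_vertices :: "('a, 'b) monoid_scheme \<Rightarrow> 'a set" where
  "nc_vertices G = carrier G - grp_center G"

definition nc_adj :: "('a, 'b) monoid_scheme \<Rightarrow> 'a \<Rightarrow> 'a \<Rightarrow> bool" where
  "nc_adj G x y \<longleftrightarrow> x \<in> nc_vertices G \<and> y \<in> nc_vertices G \<and> x \<noteq> y
      \<and> x \<otimes>\<^bsub>G\<^esub> y \<noteq> y \<otimes>\<^bsub>G\<^esub> x"

definition nc_degree :: "('a, 'b) monoid_scheme \<Rightarrow> 'a \<Rightarrow> nat" where
  "nc_degree G x = card {y \<in> nc_vertices G. nc_adj G x y}"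

definition nc_irregular :: "('a, 'b) monoid_scheme \<Rightarrow> bool" where
  "nc_irregular G \<longleftrightarrow> (\<exists>x \<in> nc_vertices G. \<exists>y \<in> nc_vertices G. nc_degree G x \<noteq> nc_degree G y)"

definition nc_graph_iso :: "('a, 'b) monoid_scheme \<Rightarrow> ('c, 'd) monoid_scheme \<Rightarrow> bool" where
  "nc_graph_iso G H \<longleftrightarrow> (\<exists>f. bij_betw f (nc_vertices G) (nc_vertices H) \<and>
      (\<forall>x \<in> nc_vertices G. \<forall>y \<in> nc_vertices G. nc_adj H (f x) (f y) \<longleftrightarrow> nc_adj G x y))"

definition p_group :: "nat \<Rightarrow> ('a, 'b) monoid_scheme \<Rightarrow> bool" where
  "p_group p G \<longleftrightarrow> group G \<and> finite (carrier G) \<and> (\<exists>k. order G = p ^ k)"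

definition comm_set :: "('a, 'b) monoid_scheme \<Rightarrow> 'a set \<Rightarrow> 'a set \<Rightarrow> 'a set" where
  "comm_set G H K = {h \<otimes>\<^bsub>G\<^esub> k \<otimes>\<^bsub>G\<^esub> inv\<^bsub>G\<^esub> h \<otimes>\<^bsub>G\<^esub> inv\<^bsub>G\<^esub> k | h k. h \<in> H \<and> k \<in> K}"

fun lower_central :: "('a, 'b) monoid_scheme \<Rightarrow> nat \<Rightarrow> 'a set" where
  "lower_central G 0 = carrier G"
| "lower_central G (Suc n) = generate G (comm_set G (lower_central G n) (carrier G))"

definition nilpotent_group :: "('a, 'b) monoid_scheme \<Rightarrow> bool" where
  "nilpotent_group G \<longleftrightarrow> group G \<and> (\<exists>n. lower_central G n = {\<one>\<^bsub>G\<^esub>})"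

end

theory Submission imports Defs "HOL-Computational_Algebra.Primes" begin

definition cent :: "('a, 'b) monoid_scheme \<Rightarrow> 'a \<Rightarrow> 'a set" where
  "cent G x = {y \<in> carrier G. x \<otimes>\<^bsub>G\<^esub> y = y \<otimes>\<^bsub>G\<^esub> x}"

lemma (in group) cent_subgroup: "x \<in> carrier G \<Longrightarrow> subgroup (cent G x) G"
proof (rule subgroupI)
  assume x: "x \<in> carrier G"
  show "cent G x \<subseteq> carrier G" by (auto simp: cent_def)
  show "cent G x \<noteq> {}" using x by (auto simp: cent_def intro!: exI[of _ \<one>])
  fix a assume a: "a \<in> cent G x"
  hence ac: "a \<in> carrier G" and e: "x \<otimes> a = a \<otimes> x" by (auto simp: cent_def)
  have "inv a \<otimes> x = inv a \<otimes> (x \<otimes> a) \<otimes> inv a" using ac x by (simp add: m_assoc)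
  also have "\<dots> = inv a \<otimes> (a \<otimes> x) \<otimes> inv a" using e by simp
  also have "\<dots> = x \<otimes> inv a" using ac x by (simp add: m_assoc[symmetric])
  finally have "inv a \<otimes> x = x \<otimes> inv a" .
  thus "inv a \<in> cent G x" using ac by (simp add: cent_def)
next
  fix a b assume x: "x \<in> carrier G" and a: "a \<in> cent G x" and b: "b \<in> cent G x"
  hence ac: "a \<in> carrier G" and ea: "x \<otimes> a = a \<otimes> x" and bc: "b \<in> carrier G" and eb: "x \<otimes> b = b \<otimes> x"
    by (auto simp: cent_def)
  have "x \<otimes> (a \<otimes> b) = (x \<otimes> a) \<otimes> b" using ac bc x by (simp add: m_assoc)
  also have "\<dots> = (a \<otimes> x) \<otimes> b" using ea by simp
  also have "\<dots> = a \<otimes> (x \<otimes> b)" using ac bc x by (simp add: m_assoc)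
  also have "\<dots> = a \<otimes> (b \<otimes> x)" using eb by simp
  also have "\<dots> = (a \<otimes> b) \<otimes> x" using ac bc x by (simp add: m_assoc)
  finally show "a \<otimes> b \<in> cent G x" using ac bc by (simp add: cent_def)
qed

lemma (in group) center_subgroup: "subgroup (grp_center G) G"
proof (rule subgroupI)
  show "grp_center G \<subseteq> carrier G" by (auto simp: grp_center_def)
  show "grp_center G \<noteq> {}" by (auto simp: grp_center_def intro!: exI[of _ \<one>])
  fix a assume a: "a \<in> grp_center G"
  hence ac: "a \<in> carrier G" and e: "\<And>g. g \<in> carrier G \<Longrightarrow> a \<otimes> g = g \<otimes> a" by (auto simp: grp_center_def)
  { fix g assume g: "g \<in> carrier G"
    have "inv a \<otimes> g = inv a \<otimes> (g \<otimes> a) \<otimes> inv a" using ac g by (simp add: m_assoc)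
    also have "\<dots> = inv a \<otimes> (a \<otimes> g) \<otimes> inv a" using e g by simp
    also have "\<dots> = g \<otimes> inv a" using ac g by (simp add: m_assoc[symmetric])
    finally have "inv a \<otimes> g = g \<otimes> inv a" . }
  thus "inv a \<in> grp_center G" using ac by (simp add: grp_center_def)
next
  fix a b assume a: "a \<in> grp_center G" and b: "b \<in> grp_center G"
  hence ac: "a \<in> carrier G" and ea: "\<And>g. g \<in> carrier G \<Longrightarrow> a \<otimes> g = g \<otimes> a"
    and bc: "b \<in> carrier G" and eb: "\<And>g. g \<in> carrier G \<Longrightarrow> b \<otimes> g = g \<otimes> b"
    by (auto simp: grp_center_def)
  { fix g assume g: "g \<in> carrier G"
    have "(a \<otimes> b) \<otimes> g = a \<otimes> (b \<otimes> g)" using ac bc g by (simp add: m_assoc)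
    also have "\<dots> = a \<otimes> (g \<otimes> b)" using g eb by simp
    also have "\<dots> = (a \<otimes> g) \<otimes> b" using ac bc g by (simp add: m_assoc)
    also have "\<dots> = (g \<otimes> a) \<otimes> b" using g ea by simp
    also have "\<dots> = g \<otimes> (a \<otimes> b)" using ac bc g by (simp add: m_assoc)
    finally have "(a \<otimes> b) \<otimes> g = g \<otimes> (a \<otimes> b)" . }
  thus "a \<otimes> b \<in> grp_center G" using ac bc by (simp add: grp_center_def)
qed

lemma (in group) sub_card_dvd: "subgroup H G \<Longrightarrow> card H dvd order G"
  by (metis dvd_triv_right lagrange)

lemma center_sub_cent: "x \<in> carrier G \<Longrightarrow> grp_center G \<subseteq> cent G x"
  by (auto simp: grp_center_def cent_def)

lemma cent_sub: "cent G x \<subseteq> carrier G" by (auto simp: cent_def)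

lemma center_sub: "grp_center G \<subseteq> carrier G" by (auto simp: grp_center_def)

lemma self_in_cent: "x \<in> carrier G \<Longrightarrow> x \<in> cent G x" by (auto simp: cent_def)

lemma cent_proper1:
  assumes "x \<in> carrier G" "x \<notin> grp_center G"
  shows "grp_center G \<subset> cent G x"
proof -
  have "x \<in> cent G x" using assms(1) by (rule self_in_cent)
  moreover have "grp_center G \<subseteq> cent G x" using assms(1) by (rule center_sub_cent)
  ultimately have "grp_center G \<noteq> cent G x" using assms(2) by auto
  thus ?thesis using center_sub_cent[OF assms(1)] by (intro psubsetI)
qed

lemma cent_proper2:
  assumes "x \<in> carrier G" "x \<notin> grp_center G"
  shows "cent G x \<subset> carrier G"
proof -
  have "\<not> (\<forall>g\<in>carrier G. x \<otimes>\<^bsub>G\<^esub> g = g \<otimes>\<^bsub>G\<^esub> x)"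
    using assms by (simp add: grp_center_def)
  then obtain g where g: "g \<in> carrier G" "x \<otimes>\<^bsub>G\<^esub> g \<noteq> g \<otimes>\<^bsub>G\<^esub> x"
    by blast
  hence "g \<notin> cent G x" by (simp add: cent_def)
  hence "cent G x \<noteq> carrier G" using g(1) by auto
  thus ?thesis using cent_sub[of G x] by (intro psubsetI)
qed

lemma degree_eq:
  assumes "x \<in> nc_vertices G" "finite (carrier G)"
  shows "nc_degree G x = order G - card (cent G x)"
proof -
  have xc: "x \<in> carrier G" using assms by (simp add: nc_vertices_def)
  have "{y \<in> nc_vertices G. nc_adj G x y} = carrier G - cent G x"
  proof
    show "{y \<in> nc_vertices G. nc_adj G x y} \<subseteq> carrier G - cent G x"
      by (auto simp: nc_adj_def nc_vertices_def cent_def)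
    show "carrier G - cent G x \<subseteq> {y \<in> nc_vertices G. nc_adj G x y}"
    proof
      fix y assume y: "y \<in> carrier G - cent G x"
      hence ne: "x \<otimes>\<^bsub>G\<^esub> y \<noteq> y \<otimes>\<^bsub>G\<^esub> x" by (auto simp: cent_def)
      have "y \<notin> grp_center G"
      proof
        assume "y \<in> grp_center G"
        hence "\<forall>g\<in>carrier G. y \<otimes>\<^bsub>G\<^esub> g = g \<otimes>\<^bsub>G\<^esub> y" by (simp add: grp_center_def)
        hence "y \<otimes>\<^bsub>G\<^esub> x = x \<otimes>\<^bsub>G\<^esub> y" using xc by blast
        thus False using ne by simp
      qed
      hence yv: "y \<in> nc_vertices G" using y by (simp add: nc_vertices_def)
      have "x \<noteq> y" using ne by auto
      thus "y \<in> {y \<in> nc_vertices G. nc_adj G x y}" using yv assms ne by (simp add: nc_adj_def)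
    qed
  qed
  thus ?thesis unfolding nc_degree_def order_def
    using card_Diff_subset[OF finite_subset[OF cent_sub assms(2)] cent_sub] by simp
qed

lemma vert_card: "finite (carrier G) \<Longrightarrow> card (nc_vertices G) = order G - card (grp_center G)"
  unfolding nc_vertices_def order_def
  using card_Diff_subset[OF finite_subset[OF center_sub[of G]] center_sub[of G]] by simp

lemma iso_props:
  assumes "nc_graph_iso G H"
  obtains f where "bij_betw f (nc_vertices G) (nc_vertices H)"
    "\<And>x. x \<in> nc_vertices G \<Longrightarrow> nc_degree H (f x) = nc_degree G x"
    "card (nc_vertices G) = card (nc_vertices H)"
proof -
  obtain f where b: "bij_betw f (nc_vertices G) (nc_vertices H)" and
    a: "\<forall>x \<in> nc_vertices G. \<forall>y \<in> nc_vertices G. nc_adj H (f x) (f y) \<longleftrightarrow> nc_adj G x y"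
    using assms by (auto simp: nc_graph_iso_def)
  have "nc_degree H (f x) = nc_degree G x" if x: "x \<in> nc_vertices G" for x
  proof -
    have "f ` {y \<in> nc_vertices G. nc_adj G x y} = {y \<in> nc_vertices H. nc_adj H (f x) y}"
    proof
      show "f ` {y \<in> nc_vertices G. nc_adj G x y} \<subseteq> {y \<in> nc_vertices H. nc_adj H (f x) y}"
        using a x b by (auto simp: bij_betw_def)
      show "{y \<in> nc_vertices H. nc_adj H (f x) y} \<subseteq> f ` {y \<in> nc_vertices G. nc_adj G x y}"
      proof
        fix y assume y: "y \<in> {y \<in> nc_vertices H. nc_adj H (f x) y}"
        then obtain z where z: "z \<in> nc_vertices G" "y = f z" using b by (auto simp: bij_betw_def)
        thus "y \<in> f ` {y \<in> nc_vertices G. nc_adj G x y}" using a x y by auto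
      qed
    qed
    moreover have "inj_on f {y \<in> nc_vertices G. nc_adj G x y}"
      using b by (auto simp: bij_betw_def intro: inj_on_subset)
    ultimately show ?thesis unfolding nc_degree_def by (metis card_image)
  qed
  moreover have "card (nc_vertices G) = card (nc_vertices H)" using b by (rule bij_betw_same_card)
  ultimately show ?thesis using that b by blast
qed

lemma key_eqs:
  assumes "nc_graph_iso G H" "finite (carrier G)" "finite (carrier H)"
  obtains f where "bij_betw f (nc_vertices G) (nc_vertices H)"
    "\<And>x. x \<in> nc_vertices G \<Longrightarrow> int (card (cent G x)) - card (grp_center G)
        = int (card (cent H (f x))) - card (grp_center H)"
    "int (order G) - card (grp_center G) = int (order H) - card (grp_center H)"
proof -
  obtain f where b: "bij_betw f (nc_vertices G) (nc_vertices H)"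
    and d: "\<And>x. x \<in> nc_vertices G \<Longrightarrow> nc_degree H (f x) = nc_degree G x"
    and c: "card (nc_vertices G) = card (nc_vertices H)"
    using iso_props[OF assms(1)] by blast
  have zg: "card (grp_center G) \<le> order G" unfolding order_def using card_mono[OF assms(2) center_sub] .
  have zh: "card (grp_center H) \<le> order H" unfolding order_def using card_mono[OF assms(3) center_sub] .
  have E0: "int (order G) - card (grp_center G) = int (order H) - card (grp_center H)"
    using c vert_card[OF assms(2)] vert_card[OF assms(3)] zg zh by linarith
  have "int (card (cent G x)) - card (grp_center G) = int (card (cent H (f x))) - card (grp_center H)"
    if x: "x \<in> nc_vertices G" for x
  proof -
    have fx: "f x \<in> nc_vertices H" using b x by (auto simp: bij_betw_def)
    have cg: "card (cent G x) \<le> order G" unfolding order_def using card_mono[OF assms(2) cent_sub] .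
    have ch: "card (cent H (f x)) \<le> order H" unfolding order_def using card_mono[OF assms(3) cent_sub] .
    show ?thesis using d[OF x] degree_eq[OF x assms(2)] degree_eq[OF fx assms(3)] cg ch E0 by linarith
  qed
  thus ?thesis using that b E0 by blast
qed

lemma cent_prod: "cent (G \<times>\<times> H) (x, y) = cent G x \<times> cent H y"
  by (auto simp: cent_def)

lemma center_prod:
  assumes "group G" "group H"
  shows "grp_center (G \<times>\<times> H) = grp_center G \<times> grp_center H"
proof -
  have o1: "\<one>\<^bsub>G\<^esub> \<in> carrier G" using assms group.is_monoid monoid.one_closed by blast
  have o2: "\<one>\<^bsub>H\<^esub> \<in> carrier H" using assms group.is_monoid monoid.one_closed by blast
  show ?thesis
  proof
    show "grp_center (G \<times>\<times> H) \<subseteq> grp_center G \<times> grp_center H"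
    proof
      fix z assume z: "z \<in> grp_center (G \<times>\<times> H)"
      obtain a b where ab: "z = (a, b)" by fastforce
      have c: "a \<in> carrier G" "b \<in> carrier H" using z ab by (auto simp: grp_center_def)
      have "\<And>g h. g \<in> carrier G \<Longrightarrow> h \<in> carrier H \<Longrightarrow> a \<otimes>\<^bsub>G\<^esub> g = g \<otimes>\<^bsub>G\<^esub> a \<and> b \<otimes>\<^bsub>H\<^esub> h = h \<otimes>\<^bsub>H\<^esub> b"
        using z ab by (auto simp: grp_center_def)
      thus "z \<in> grp_center G \<times> grp_center H" using ab c o1 o2 by (auto simp: grp_center_def)
    qed
    show "grp_center G \<times> grp_center H \<subseteq> grp_center (G \<times>\<times> H)"
      by (auto simp: grp_center_def)
  qed
qed

lemma order_prod: "finite (carrier G) \<Longrightarrow> finite (carrier H) \<Longrightarrow> order (G \<times>\<times> H) = order G * order H"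
  by (simp add: order_def card_cartesian_product)

lemma vert_prod:
  assumes "group G" "group H"
  shows "(a, b) \<in> nc_vertices (G \<times>\<times> H) \<longleftrightarrow> a \<in> carrier G \<and> b \<in> carrier H \<and> \<not> (a \<in> grp_center G \<and> b \<in> grp_center H)"
  using center_prod[OF assms] by (auto simp: nc_vertices_def)

lemma noncomm_ex:
  assumes "group G" "\<not> comm_group G"
  obtains x where "x \<in> carrier G" "x \<notin> grp_center G"
proof -
  have "\<exists>x \<in> carrier G. x \<notin> grp_center G"
  proof (rule ccontr)
    assume "\<not> ?thesis"
    hence "\<And>x y. x \<in> carrier G \<Longrightarrow> y \<in> carrier G \<Longrightarrow> x \<otimes>\<^bsub>G\<^esub> y = y \<otimes>\<^bsub>G\<^esub> x"
      by (auto simp: grp_center_def)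
    hence "comm_group G" using group.group_comm_groupI[OF assms(1)] by blast
    thus False using assms(2) by blast
  qed
  thus ?thesis using that by blast
qed

lemma comm_center: "comm_group G \<Longrightarrow> grp_center G = carrier G"
  by (auto simp: grp_center_def comm_group_def comm_monoid.m_comm)

lemma comm_cent: "comm_group G \<Longrightarrow> x \<in> carrier G \<Longrightarrow> cent G x = carrier G"
  by (auto simp: cent_def comm_group_def comm_monoid.m_comm)

lemma pgroup_sub:
  assumes "Factorial_Ring.prime p" "p_group p G" "subgroup H G"
  obtains i where "card H = p ^ i"
proof -
  obtain n where n: "order G = p ^ n" using assms by (auto simp: p_group_def)
  have "card H dvd p ^ n" using group.sub_card_dvd[OF _ assms(3)] assms n by (auto simp: p_group_def)
  thus ?thesis using that divides_primepow_nat[OF assms(1)] by blast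
qed

lemma pgroup_exps:
  assumes pr: "Factorial_Ring.prime p" and pg: "p_group p G" and x: "x \<in> carrier G" "x \<notin> grp_center G"
  obtains n z a where "order G = p^n" "card (grp_center G) = p^z" "card (cent G x) = p^a" "z < a" "a < n"
proof -
  have g: "group G" and f: "finite (carrier G)" using pg by (auto simp: p_group_def)
  obtain n where n: "order G = p ^ n" using pg by (auto simp: p_group_def)
  obtain z where z: "card (grp_center G) = p^z" using pgroup_sub[OF pr pg group.center_subgroup[OF g]] by blast
  obtain a where a: "card (cent G x) = p^a" using pgroup_sub[OF pr pg group.cent_subgroup[OF g x(1)]] by blast
  have p1: "p > 1" using pr prime_gt_1_nat by blast
  have "card (grp_center G) < card (cent G x)"
    using psubset_card_mono[OF finite_subset[OF cent_sub f] cent_proper1[OF x]] .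
  hence za: "z < a" using z a p1 power_less_imp_less_exp by metis
  have "card (cent G x) < order G" unfolding order_def
    using psubset_card_mono[OF f cent_proper2[OF x]] .
  hence an: "a < n" using n a p1 power_less_imp_less_exp by metis
  show ?thesis using that n z a za an by blast
qed



lemma val_eq:
  fixes p u w :: int
  assumes "Factorial_Ring.prime p" "p^a*u = p^b*w" "\<not> p dvd u" "\<not> p dvd w"
  shows "a = b"
proof (rule ccontr)
  assume ne: "a \<noteq> b"
  have p0: "p \<noteq> 0" using assms(1) by auto
  show False
  proof (cases "a < b")
    case True
    have "p^b = p^a * p^(b-a)" using True by (simp add: power_add[symmetric])
    hence "p^a*u = p^a*(p^(b-a)*w)" using assms(2) by (simp add: mult.assoc)
    hence "u = p^(b-a)*w" using p0 by simp
    moreover have "p dvd p^(b-a)" using True by simp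
    ultimately show False using assms(3) by simp
  next
    case False
    hence F: "b < a" using ne by simp
    have "p^a = p^b * p^(a-b)" using F by (simp add: power_add[symmetric])
    hence "p^b*(p^(a-b)*u) = p^b*w" using assms(2) by (simp add: mult.assoc)
    hence "w = p^(a-b)*u" using p0 by simp
    moreover have "p dvd p^(a-b)" using F by simp
    ultimately show False using assms(4) by simp
  qed
qed

lemma ndvd_pow_minus1:
  fixes p :: int assumes "Factorial_Ring.prime p" "k \<ge> 1" shows "\<not> p dvd (p^k - 1)"
proof
  assume "p dvd p^k - 1"
  moreover have "p dvd p^k" using assms(2) by (simp add: dvd_power)
  ultimately have "p dvd p^k - (p^k - 1)" by (rule dvd_diff[rotated])
  hence "p dvd 1" by simp
  thus False using assms(1) by (metis not_prime_unit)
qed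

lemma ndvd_pow_minus:
  fixes p :: int assumes "Factorial_Ring.prime p" "k \<ge> 1" "\<not> p dvd m" shows "\<not> p dvd (p^k*q - m)"
proof
  assume "p dvd p^k*q - m"
  moreover have "p dvd p^k*q" using assms(2) by (simp add: dvd_power)
  ultimately have "p dvd p^k*q - (p^k*q - m)" by (rule dvd_diff[rotated])
  hence "p dvd m" by simp
  thus False using assms(3) by simp
qed

lemma ndvd_prod:
  fixes p :: int assumes "Factorial_Ring.prime p" "\<not> p dvd a" "\<not> p dvd b" shows "\<not> p dvd (a*b)"
  using assms prime_dvd_mult_iff by blast

lemma arith1:
  fixes p al q m :: int
  assumes pr: "Factorial_Ring.prime p" and al: "\<not> p dvd al" and q: "\<not> p dvd q" and m: "\<not> p dvd m"
    and zn: "z < n" and zn1: "z1 < n1"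
    and E0: "p^n*al - p^z*al = p^n1*q - p^z1*m"
  shows "z = z1"
proof -
  have "p^n = p^z * p^(n-z)" using zn by (simp add: power_add[symmetric])
  hence L: "p^n*al - p^z*al = p^z*(al*(p^(n-z)-1))" by (simp add: algebra_simps)
  have "p^n1 = p^z1 * p^(n1-z1)" using zn1 by (simp add: power_add[symmetric])
  hence R: "p^n1*q - p^z1*m = p^z1*(p^(n1-z1)*q - m)" by (simp add: algebra_simps)
  show ?thesis
    apply (rule val_eq[OF pr, of z "al*(p^(n-z)-1)" z1 "p^(n1-z1)*q - m"])
    using E0 L R apply simp
    using ndvd_prod[OF pr al ndvd_pow_minus1[OF pr]] zn apply simp
    using ndvd_pow_minus[OF pr _ m] zn1 by simp
qed

lemma cancel_z:
  fixes p al q m :: int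
  assumes pr: "Factorial_Ring.prime p" and za: "z < a" and zb: "z < b"
    and E: "p^a*al - p^z*al = p^b*q - p^z*m"
  shows "al*(p^(a-z)-1) = p^(b-z)*q - m"
proof -
  have "p^a = p^z * p^(a-z)" using za by (simp add: power_add[symmetric])
  hence L: "p^a*al - p^z*al = p^z*(al*(p^(a-z)-1))" by (simp add: algebra_simps)
  have "p^b = p^z * p^(b-z)" using zb by (simp add: power_add[symmetric])
  hence R: "p^b*q - p^z*m = p^z*(p^(b-z)*q - m)" by (simp add: algebra_simps)
  have "p \<noteq> 0" using pr by auto
  thus ?thesis using E L R by simp
qed

lemma arithA:
  fixes p al q m :: int
  assumes pr: "Factorial_Ring.prime p" and al: "\<not> p dvd al" and q: "\<not> p dvd q"
    and F0: "al*(p^N-1) = p^N1*q - m" and F1: "al*(p^k-1) = p^j*q - m"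
    and "1 \<le> k" "k < N" "1 \<le> j" "j < N1"
  shows "k = j"
proof -
  have "p^N = p^k * p^(N-k)" using assms by (simp add: power_add[symmetric])
  hence L: "al*(p^N-1) - al*(p^k-1) = p^k*(al*(p^(N-k)-1))" by (simp add: algebra_simps)
  have "p^N1 = p^j * p^(N1-j)" using assms by (simp add: power_add[symmetric])
  hence R: "(p^N1*q - m) - (p^j*q - m) = p^j*(q*(p^(N1-j)-1))" by (simp add: algebra_simps)
  show ?thesis
    apply (rule val_eq[OF pr, of k "al*(p^(N-k)-1)" j "q*(p^(N1-j)-1)"])
    using F0 F1 L R apply simp
    using ndvd_prod[OF pr al ndvd_pow_minus1[OF pr]] assms apply simp
    using ndvd_prod[OF pr q ndvd_pow_minus1[OF pr]] assms by simp
qed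

lemma arithB:
  fixes p al q m c :: int
  assumes pr: "Factorial_Ring.prime p" and al: "\<not> p dvd al" and alp: "al > 0"
    and F1: "al*(p^j-1) = p^j*q - m" and F2: "al*(p^k-1) = p^j* c - m"
    and "c < q" "1 \<le> k"
  shows False
proof -
  have p1: "p > 1" using pr prime_gt_1_int by blast
  have D: "al*(p^j - p^k) = p^j*(q-c)" using F1 F2 by (simp add: algebra_simps)
  have "p^j*(q-c) > 0" using p1 assms by simp
  hence "p^j - p^k > 0" using D alp by (metis zero_less_mult_pos)
  hence "p^k < p^j" by simp
  hence kj: "k < j" using p1 power_less_imp_less_exp by blast
  have "p^j = p^k * p^(j-k)" using kj by (simp add: power_add[symmetric])
  hence "p^k*(al*(p^(j-k)-1)) = p^k*(p^(j-k)*(q-c))" using D by (simp add: algebra_simps)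
  hence E: "al*(p^(j-k)-1) = p^(j-k)*(q-c)" using p1 by simp
  have "p dvd p^(j-k)*(q-c)" using kj by simp
  hence "p dvd al*(p^(j-k)-1)" using E by simp
  thus False using ndvd_prod[OF pr al ndvd_pow_minus1[OF pr]] kj by simp
qed

lemma arithC:
  fixes p al q :: int
  assumes pr: "Factorial_Ring.prime p"
    and F0: "al*(p^N-1) = p^N1*q - q" and F1: "al*(p^j-1) = p^j*q - q"
    and "1 \<le> j" and qp: "q > 0"
  shows "al = q \<and> N = N1"
proof -
  have p1: "p > 1" using pr prime_gt_1_int by blast
  have "p^j > 1" using p1 assms by simp
  hence "al = q" using F1 by (metis mult.commute mult_cancel_right right_diff_distrib' mult_1 less_irrefl eq_iff_diff_eq_0)
  hence "q*(p^N - 1) = q*(p^N1 - 1)" using F0 by (simp add: algebra_simps)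
  hence "p^N = p^N1" using qp by simp
  thus ?thesis using p1 \<open>al = q\<close> power_inject_exp by blast
qed

lemma cent_one: assumes "group G" shows "cent G \<one>\<^bsub>G\<^esub> = carrier G"
proof -
  interpret group G by fact
  show ?thesis by (auto simp: cent_def)
qed

lemma coprime_ndvd: "Factorial_Ring.prime (p::nat) \<Longrightarrow> coprime p k \<Longrightarrow> \<not> int p dvd int k"
  by (metis int_dvd_int_iff coprime_absorb_left not_prime_unit)

lemma card_pos: "group G \<Longrightarrow> finite (carrier G) \<Longrightarrow> order G > 0"
  unfolding order_def using group.is_monoid monoid.one_closed card_gt_0_iff by blast

theorem mainTheorem6:
  fixes p :: nat
    and P :: "'a monoid" and A :: "'b monoid"
    and P1 :: "'c monoid" and Q :: "'d monoid"
  assumes "Factorial_Ring.prime p"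
    and "p_group p P" and "\<not> comm_group P"
    and "comm_group A" and "finite (carrier A)" and "order A > 1" and "coprime p (order A)"
    and "p_group p P1" and "\<not> comm_group P1"
    and "group Q" and "finite (carrier Q)" and "coprime p (order Q)"
    and "nilpotent_group (P1 \<times>\<times> Q)"
    and "nc_irregular (P \<times>\<times> A)" and "nc_irregular (P1 \<times>\<times> Q)"
    and "nc_graph_iso (P \<times>\<times> A) (P1 \<times>\<times> Q)"
  shows "order (P \<times>\<times> A) = order (P1 \<times>\<times> Q)"
proof -
  note pr = assms(1)
  define pi where "pi = int p"
  have pri: "Factorial_Ring.prime pi" using pr by (simp add: pi_def)
  have p1: "p > 1" using pr prime_gt_1_nat by blast
  have gP: "group P" and fP: "finite (carrier P)" using assms(2) by (auto simp: p_group_def)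
  have gP1: "group P1" and fP1: "finite (carrier P1)" using assms(8) by (auto simp: p_group_def)
  have gA: "group A" using assms(4) by (simp add: comm_group_def)
  note gQ = assms(10) and fA = assms(5) and fQ = assms(11)
  have gG: "group (P \<times>\<times> A)" using DirProd_group[OF gP gA] .
  have gH: "group (P1 \<times>\<times> Q)" using DirProd_group[OF gP1 gQ] .
  have fG: "finite (carrier (P \<times>\<times> A))" using fP fA by simp
  have fH: "finite (carrier (P1 \<times>\<times> Q))" using fP1 fQ by simp
  obtain f where bij: "bij_betw f (nc_vertices (P \<times>\<times> A)) (nc_vertices (P1 \<times>\<times> Q))"
    and eqC: "\<And>x. x \<in> nc_vertices (P \<times>\<times> A) \<Longrightarrow> int (card (cent (P \<times>\<times> A) x)) - card (grp_center (P \<times>\<times> A))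
        = int (card (cent (P1 \<times>\<times> Q) (f x))) - card (grp_center (P1 \<times>\<times> Q))"
    and eq0: "int (order (P \<times>\<times> A)) - card (grp_center (P \<times>\<times> A)) = int (order (P1 \<times>\<times> Q)) - card (grp_center (P1 \<times>\<times> Q))"
    using key_eqs[OF assms(16) fG fH] by blast
  define al where "al = order A"
  define q where "q = order Q"
  define m where "m = card (grp_center Q)"
  have alp: "al > 0" using assms(6) al_def by simp
  have qp: "q > 0" using card_pos[OF gQ fQ] q_def by simp
  have ndal: "\<not> pi dvd int al" using coprime_ndvd[OF pr assms(7)] al_def pi_def by simp
  have ndq: "\<not> pi dvd int q" using coprime_ndvd[OF pr assms(12)] q_def pi_def by simp
  have "m dvd q" using group.sub_card_dvd[OF gQ group.center_subgroup[OF gQ]] m_def q_def by simp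
  hence ndm: "\<not> pi dvd int m" using ndq by (meson dvd_trans int_dvd_int_iff)
  have ZA: "grp_center A = carrier A" using comm_center[OF assms(4)] .
  have cZG: "card (grp_center (P \<times>\<times> A)) = card (grp_center P) * al"
    using center_prod[OF gP gA] ZA al_def by (simp add: card_cartesian_product order_def)
  have cZH: "card (grp_center (P1 \<times>\<times> Q)) = card (grp_center P1) * m"
    using center_prod[OF gP1 gQ] m_def by (simp add: card_cartesian_product)
  have oG: "order (P \<times>\<times> A) = order P * al" using order_prod[OF fP fA] al_def by simp
  have oH: "order (P1 \<times>\<times> Q) = order P1 * q" using order_prod[OF fP1 fQ] q_def by simp
  have pre: "\<exists>x1 x2. (x1, x2) \<in> nc_vertices (P \<times>\<times> A) \<and> f (x1, x2) = w \<and> x1 \<in> carrier P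
      \<and> x1 \<notin> grp_center P \<and> x2 \<in> carrier A" if w: "w \<in> nc_vertices (P1 \<times>\<times> Q)" for w
  proof -
    have "w \<in> f ` nc_vertices (P \<times>\<times> A)" using bij w by (simp add: bij_betw_def)
    then obtain x where x: "x \<in> nc_vertices (P \<times>\<times> A)" "f x = w" by blast
    obtain x1 x2 where xx: "x = (x1, x2)" by fastforce
    have "x1 \<in> carrier P \<and> x2 \<in> carrier A \<and> \<not> (x1 \<in> grp_center P \<and> x2 \<in> grp_center A)"
      using x(1) xx vert_prod[OF gP gA] by simp
    thus ?thesis using x xx ZA by blast
  qed
  have cCG: "card (cent (P \<times>\<times> A) (x1, x2)) = card (cent P x1) * al" if "x2 \<in> carrier A" for x1 x2
    using comm_cent[OF assms(4) that] al_def by (simp add: cent_prod card_cartesian_product order_def)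
  obtain y1 where y1: "y1 \<in> carrier P1" "y1 \<notin> grp_center P1" using noncomm_ex[OF gP1 assms(9)] by blast
  obtain n1 z1 b where ob: "order P1 = p^n1" "card (grp_center P1) = p^z1" "card (cent P1 y1) = p^b"
    "z1 < b" "b < n1" using pgroup_exps[OF pr assms(8) y1] by blast
  have oneQ: "\<one>\<^bsub>Q\<^esub> \<in> carrier Q" using gQ group.is_monoid monoid.one_closed by blast
  have vH: "(y1, \<one>\<^bsub>Q\<^esub>) \<in> nc_vertices (P1 \<times>\<times> Q)" using vert_prod[OF gP1 gQ] y1 oneQ by simp
  obtain x1 x2 where xv: "(x1, x2) \<in> nc_vertices (P \<times>\<times> A)" "f (x1, x2) = (y1, \<one>\<^bsub>Q\<^esub>)"
    "x1 \<in> carrier P" "x1 \<notin> grp_center P" "x2 \<in> carrier A" using pre[OF vH] by blast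
  obtain n z a where oa: "order P = p^n" "card (grp_center P) = p^z" "card (cent P x1) = p^a"
    "z < a" "a < n" using pgroup_exps[OF pr assms(2) xv(3,4)] by blast
  have cv: "card (cent (P1 \<times>\<times> Q) (y1, \<one>\<^bsub>Q\<^esub>)) = p^b * q"
    using cent_one[OF gQ] ob q_def by (simp add: cent_prod card_cartesian_product order_def)
  have E0: "pi^n * al - pi^z * al = pi^n1 * q - pi^z1 * m"
    using eq0 oG oH cZG cZH oa ob unfolding pi_def by simp
  have E1: "pi^a * al - pi^z * al = pi^b * q - pi^z1 * m"
    using eqC[OF xv(1)] xv(2) cCG[OF xv(5)] cv cZG cZH oa ob unfolding pi_def by simp
  have zz: "z = z1" using arith1[OF pri ndal ndq ndm oa(4)[THEN less_trans, OF oa(5)] ob(4)[THEN less_trans, OF ob(5)] E0] .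
  have F0: "al*(pi^(n-z)-1) = pi^(n1-z)*q - m"
    using cancel_z[OF pri, of z n n1 al q m] E0 zz oa ob by simp
  have F1: "al*(pi^(a-z)-1) = pi^(b-z)*q - m"
    using cancel_z[OF pri, of z a b al q m] E1 zz oa ob by simp
  have kj: "a - z = b - z"
    using arithA[OF pri ndal ndq F0 F1] oa ob zz by simp
  have F1': "al*(pi^(b-z)-1) = pi^(b-z)*q - m" using F1 kj by simp
  have cQ: "comm_group Q"
  proof (rule ccontr)
    assume nc: "\<not> comm_group Q"
    obtain y2 where y2: "y2 \<in> carrier Q" "y2 \<notin> grp_center Q" using noncomm_ex[OF gQ nc] by blast
    have wH: "(y1, y2) \<in> nc_vertices (P1 \<times>\<times> Q)" using vert_prod[OF gP1 gQ] y1 y2 by simp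
    obtain u1 u2 where uv: "(u1, u2) \<in> nc_vertices (P \<times>\<times> A)" "f (u1, u2) = (y1, y2)"
      "u1 \<in> carrier P" "u1 \<notin> grp_center P" "u2 \<in> carrier A" using pre[OF wH] by blast
    obtain n' z' a' where oa': "order P = p^n'" "card (grp_center P) = p^z'" "card (cent P u1) = p^a'"
      "z' < a'" "a' < n'" using pgroup_exps[OF pr assms(2) uv(3,4)] by blast
    have "z' = z" using oa'(2) oa(2) p1 power_inject_exp by metis
    define c where "c = card (cent Q y2)"
    have "c < q" unfolding c_def q_def order_def
      using psubset_card_mono[OF fQ cent_proper2[OF y2]] .
    have cw: "card (cent (P1 \<times>\<times> Q) (y1, y2)) = p^b * c"
      using ob c_def by (simp add: cent_prod card_cartesian_product)
    have E2: "pi^a' * al - pi^z * al = pi^b * c - pi^z1 * m"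
      using eqC[OF uv(1)] uv(2) cCG[OF uv(5)] cw cZG cZH oa' \<open>z' = z\<close> oa ob unfolding pi_def by simp
    have F2: "al*(pi^(a'-z)-1) = pi^(b-z)* c - m"
      using cancel_z[OF pri, of z a' b al c m] E2 zz oa' \<open>z' = z\<close> ob by simp
    have k1: "1 \<le> a' - z" using oa'(4) \<open>z' = z\<close> by linarith
    have "int c < int q" using \<open>c < q\<close> by simp
    moreover have "int al > 0" using alp by simp
    ultimately show False using arithB[OF pri ndal _ F1' F2 _ k1] by blast
  qed
  hence mq: "m = q" using comm_center[OF cQ] m_def q_def by (simp add: order_def)
  have "al = q \<and> n - z = n1 - z"
    using arithC[OF pri, of al "n-z" "n1-z" q "b-z"] F0 F1' mq ob zz qp by simp
  hence "p^n * al = p^n1 * q" using oa ob zz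
    by (metis le_add_diff_inverse less_imp_le_nat less_trans)
  thus ?thesis using oG oH oa ob by simp
qed

end
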